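(* Let $\alpha$, $F_\alpha$, the $\alpha$-Lüroth expansions and the measure $\mu_\alpha$ be as in the context, and let $T:\mathcal U\to\mathcal U$ be the tent map $T(x)=2x$ for $x\in[0,1/2)$, $T(x)=2-2x$ for $x\in[1/2,1]$. Define $\theta_\alpha:\mathcal U\to\mathcal U$ by $\theta_\alpha(0)=0$ and, for $x=[\ell_1,\ell_2,\dots]_\alpha$, \[\theta_\alpha(x):=-2\sum_{k\ge1}(-1)^k2^{-\sum_{i=1}^k\ell_i}\] (the sum being finite if the expansion is finite). Then $\theta_\alpha$ is a homeomorphism with $\theta_\alpha\circ F_\alpha=T\circ\theta_\alpha$, so $(\mathcal U,F_\alpha)$ and $(\mathcal U,T)$ are topologically conjugate. Moreover, $\theta_\alpha$ equals the distribution function $x\mapsto\mu_\alpha([0,x])$ of $\mu_\alpha$.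
   Context: Let $\mathcal U=[0,1]$. $\alpha=\{A_n:n\in\mathbb N\}$ is a countable partition of $\mathcal U$ (up to the point $0$) into left-open, right-closed intervals of positive length, ordered from right to left starting with $A_1$, accumulating only at $0$; $a_n$ is the length of $A_n$, $t_n:=\sum_{k\ge n}a_k$, $A_n=(t_{n+1},t_n]$. $F_\alpha(x)=(1-x)/a_1$ on $A_1$, $F_\alpha(x)=a_{n-1}(x-t_{n+1})/a_n+t_n$ on $A_n$ ($n\ge2$), $F_\alpha(0)=0$; $L_\alpha(x)=(t_n-x)/a_n$ on $A_n$, $L_\alpha(0)=0$. For $x\ne0$, the $\alpha$-Lüroth digits $\ell_k$ are defined by $L_\alpha^{k-1}(x)\in A_{\ell_k}$, the sequence terminating at step $k$ iff $L_\alpha^{k-1}(x)=t_n$ for some $n\ge2$; one writes $x=[\ell_1,\ell_2,\dots]_\alpha$, and $x=\sum_{n}(-1)^{n-1}(\prod_{i<n}a_{\ell_i})t_{\ell_n}$. The $\alpha$-Farey cylinder sets of level $n$ are $\widehat C_\alpha(x_1,\dots,x_n):=\{y\in\mathcal U: \text{for } k=1,\dots,n,\ F_\alpha^{k-1}(y)\in A_1 \text{ iff } x_k=1\}$ for $x_1,\dots,x_n\in\{0,1\}$ (these form a partition of $\mathcal U$ into $2^n$ intervals). $\mu_\alpha$ is the measure of maximal entropy of $F_\alpha$, i.e. the Borel probability measure assigning mass $2^{-n}$ to each $n$-th level $\alpha$-Farey cylinder set. *)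

theory Defs
  imports "HOL-Probability.Probability"
begin

text \<open>The partition alpha is encoded by the lengths a n (n >= 1) of the intervals A_n;
  the value a 0 is irrelevant.\<close>

definition alpha_partition :: "(nat \<Rightarrow> real) \<Rightarrow> bool" where
  "alpha_partition a \<longleftrightarrow> (\<forall>n\<ge>1. a n > 0) \<and> ((\<lambda>k. a (Suc k)) sums 1)"

definition tt :: "(nat \<Rightarrow> real) \<Rightarrow> nat \<Rightarrow> real" where
  "tt a n = (\<Sum>k. a (k + n))"

definition AA :: "(nat \<Rightarrow> real) \<Rightarrow> nat \<Rightarrow> real set" where
  "AA a n = {tt a (Suc n)<..tt a n}"

text \<open>index n >= 1 of the interval A_n containing x (meaningful for x in (0,1])\<close>
definition idx :: "(nat \<Rightarrow> real) \<Rightarrow> real \<Rightarrow> nat" where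
  "idx a x = (THE n. n \<ge> 1 \<and> x \<in> AA a n)"

definition F_alpha :: "(nat \<Rightarrow> real) \<Rightarrow> real \<Rightarrow> real" where
  "F_alpha a x =
     (if x = 0 then 0
      else if idx a x = 1 then (1 - x) / a 1
      else a (idx a x - 1) * (x - tt a (Suc (idx a x))) / a (idx a x) + tt a (idx a x))"

definition L_alpha :: "(nat \<Rightarrow> real) \<Rightarrow> real \<Rightarrow> real" where
  "L_alpha a x = (if x = 0 then 0 else (tt a (idx a x) - x) / a (idx a x))"

text \<open>k-th alpha-Lueroth digit (k >= 1): L^(k-1)(x) lies in A_(digit k);
  it exists as long as L^(k-1)(x) is nonzero, and the expansion ends at step k iff L^k(x) = 0.\<close>
definition luroth_digit :: "(nat \<Rightarrow> real) \<Rightarrow> real \<Rightarrow> nat \<Rightarrow> nat" where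
  "luroth_digit a x k = idx a ((L_alpha a ^^ (k - 1)) x)"

definition theta_term :: "(nat \<Rightarrow> real) \<Rightarrow> real \<Rightarrow> nat \<Rightarrow> real" where
  "theta_term a x k =
     (if (L_alpha a ^^ (k - 1)) x \<noteq> 0
      then (-1) ^ k * (1/2) ^ (\<Sum>i=1..k. luroth_digit a x i) else 0)"

definition theta_alpha :: "(nat \<Rightarrow> real) \<Rightarrow> real \<Rightarrow> real" where
  "theta_alpha a x = (if x = 0 then 0 else - 2 * (\<Sum>k. theta_term a x (Suc k)))"

definition tent :: "real \<Rightarrow> real" where
  "tent x = (if x < 1/2 then 2 * x else 2 - 2 * x)"

text \<open>alpha-Farey cylinder set; the list xs of booleans encodes x_1..x_n (True = 1).\<close>
definition farey_cyl :: "(nat \<Rightarrow> real) \<Rightarrow> bool list \<Rightarrow> real set" where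
  "farey_cyl a xs = {y \<in> {0..1}. \<forall>k < length xs. ((F_alpha a ^^ k) y \<in> AA a 1 \<longleftrightarrow> xs ! k)}"

text \<open>mu is a Borel probability measure on [0,1] which is a measure of maximal entropy
  in the sense of the paper: mass 2^-n on every n-th level Farey cylinder.\<close>
definition is_mu_alpha :: "(nat \<Rightarrow> real) \<Rightarrow> real measure \<Rightarrow> bool" where
  "is_mu_alpha a \<mu> \<longleftrightarrow> prob_space \<mu> \<and> sets \<mu> = sets (restrict_space borel {0..1::real})
     \<and> (\<forall>xs. measure \<mu> (farey_cyl a xs) = (1/2) ^ length xs)"

end

theory Submission
  imports Defs
begin



locale AP = fixes a :: "nat \<Rightarrow> real" assumes ap: "alpha_partition a"
begin

lemma apos: "n \<ge> 1 \<Longrightarrow> a n > 0"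
  using ap unfolding alpha_partition_def by auto

lemma asums: "(\<lambda>k. a (Suc k)) sums 1"
  using ap unfolding alpha_partition_def by auto

lemma asum: "summable (\<lambda>k. a (Suc k))" using asums sums_summable by blast

lemma tt_Suc_formula: "tt a (Suc k) = 1 - (\<Sum>i<k. a (Suc i))"
proof -
  have "tt a (Suc k) = (\<Sum>n. a (Suc (n + k)))" unfolding tt_def by simp
  also have "\<dots> = (\<Sum>n. a (Suc n)) - (\<Sum>i<k. a (Suc i))"
    using suminf_minus_initial_segment[OF asum, of k] by simp
  also have "(\<Sum>n. a (Suc n)) = 1" using asums sums_unique by metis
  finally show ?thesis .
qed

lemma tt1: "tt a 1 = 1" using tt_Suc_formula[of 0] by simp

lemma tt_step: "n \<ge> 1 \<Longrightarrow> tt a n = a n + tt a (Suc n)"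
proof -
  assume "n \<ge> 1" then obtain k where k: "n = Suc k" by (cases n) auto
  show ?thesis unfolding k tt_Suc_formula by simp
qed

lemma tt_lim: "(\<lambda>k. tt a (Suc k)) \<longlonglongrightarrow> 0"
proof -
  have "(\<lambda>k. \<Sum>i<k. a (Suc i)) \<longlonglongrightarrow> 1" using asums unfolding sums_def .
  hence "(\<lambda>k. 1 - (\<Sum>i<k. a (Suc i))) \<longlonglongrightarrow> 1 - 1"
    by (intro tendsto_intros)
  thus ?thesis unfolding tt_Suc_formula by simp
qed

lemma tt_pos: "n \<ge> 1 \<Longrightarrow> tt a n > 0"
proof -
  assume n: "n \<ge> 1"
  have "tt a (Suc n) \<ge> 0"
  proof -
    have "tt a (Suc n) = (\<Sum>k. a (k + Suc n))" by (simp add: tt_def)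
    also have "\<dots> \<ge> 0"
    proof (rule suminf_nonneg)
      have "summable (\<lambda>k. a (Suc (k + n)))"
        using summable_ignore_initial_segment[OF asum, of n] by simp
      thus "summable (\<lambda>k. a (k + Suc n))" by simp
      show "\<And>k. 0 \<le> a (k + Suc n)" using apos by (simp add: less_imp_le)
    qed
    finally show ?thesis .
  qed
  thus ?thesis using tt_step[OF n] apos[OF n] by simp
qed

lemma tt_nonneg: "n \<ge> 1 \<Longrightarrow> tt a n \<ge> 0" using tt_pos by (simp add: less_imp_le)

lemma tt_less: "1 \<le> n \<Longrightarrow> n < m \<Longrightarrow> tt a m < tt a n"
proof (induction m)
  case 0 thus ?case by simp
next
  case (Suc m)
  have "tt a (Suc m) < tt a m" using tt_step[of m] apos[of m] Suc.prems by simp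
  thus ?case using Suc by (cases "n < m") (auto simp: less_Suc_eq)
qed

lemma tt_le: "1 \<le> n \<Longrightarrow> n \<le> m \<Longrightarrow> tt a m \<le> tt a n"
  using tt_less by (cases "n = m") (auto simp: less_imp_le)

lemma AA_disj: "1 \<le> n \<Longrightarrow> 1 \<le> m \<Longrightarrow> x \<in> AA a n \<Longrightarrow> x \<in> AA a m \<Longrightarrow> n = m"
proof (rule ccontr)
  assume h: "1 \<le> n" "1 \<le> m" "x \<in> AA a n" "x \<in> AA a m" "n \<noteq> m"
  { fix n m assume "1 \<le> n" "n < m" "x \<in> AA a n" "x \<in> AA a m"
    hence False using tt_le[of "Suc n" m] unfolding AA_def by auto }
  thus False using h by (cases "n < m") (auto simp: not_less dest: le_neq_trans)
qed

lemma idx_eq: "1 \<le> n \<Longrightarrow> x \<in> AA a n \<Longrightarrow> idx a x = n"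
  unfolding idx_def using AA_disj by blast

lemma exists_AA: assumes "0 < x" "x \<le> 1" shows "\<exists>n\<ge>1. x \<in> AA a n"
proof -
  obtain k where k: "tt a (Suc k) < x"
    using tt_lim assms(1) unfolding lim_sequentially by (metis diff_0_right dist_real_def abs_less_iff le_refl)
  define N where "N = (LEAST m. m \<ge> 1 \<and> tt a m < x)"
  have P: "N \<ge> 1 \<and> tt a N < x" unfolding N_def by (rule LeastI[of _ "Suc k"]) (use k in auto)
  have N2: "N \<ge> 2" using P tt1 assms(2) by (cases N; cases "N - 1") auto
  have "\<not> (N - 1 \<ge> 1 \<and> tt a (N - 1) < x)"
  proof
    assume "N - 1 \<ge> 1 \<and> tt a (N - 1) < x"
    hence "N \<le> N - 1" unfolding N_def by (rule Least_le)
    thus False using N2 by simp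
  qed
  hence "x \<le> tt a (N - 1)" using N2 by auto
  moreover have "Suc (N - 1) = N" using N2 by simp
  ultimately have "x \<in> AA a (N - 1)" using P unfolding AA_def by auto
  thus ?thesis using N2 by (intro exI[of _ "N - 1"]) auto
qed

lemma idx_props: assumes "0 < x" "x \<le> 1"
  shows "idx a x \<ge> 1" "x \<in> AA a (idx a x)" "tt a (Suc (idx a x)) < x" "x \<le> tt a (idx a x)"
proof -
  obtain n where "n \<ge> 1" "x \<in> AA a n" using exists_AA assms by blast
  moreover hence "idx a x = n" by (rule idx_eq)
  ultimately show "idx a x \<ge> 1" "x \<in> AA a (idx a x)" "tt a (Suc (idx a x)) < x" "x \<le> tt a (idx a x)"
    unfolding AA_def by auto
qed

lemma a_le_q: assumes "n \<ge> 1" shows "a n \<le> 1 - min (a 1) (a 2)"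
proof -
  have key: "a n + a m \<le> 1" if "m \<ge> 1" "m \<noteq> n" for m
  proof -
    have "(\<Sum>i\<in>{n - 1, m - 1}. a (Suc i)) \<le> (\<Sum>i. a (Suc i))"
      by (rule sum_le_suminf[OF asum]) (simp_all add: less_imp_le apos)
    moreover have "(\<Sum>i. a (Suc i)) = 1" using asums sums_unique by metis
    moreover have "(\<Sum>i\<in>{n - 1, m - 1}. a (Suc i)) = a n + a m"
      using that assms by (simp add: Suc_pred')
    ultimately show ?thesis by simp
  qed
  show ?thesis
  proof (cases "n = 1")
    case True thus ?thesis using key[of 2] by simp
  next
    case False thus ?thesis using key[of 1] by simp
  qed
qed

lemma q_lt1: "1 - min (a 1) (a 2) < 1" using apos[of 1] apos[of 2] by simp
lemma q_ge0: "0 \<le> 1 - min (a 1) (a 2)" using a_le_q[of 1] apos[of 1] by simp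

end


context AP begin

abbreviation "L \<equiv> L_alpha a"
abbreviation "\<phi> \<equiv> theta_alpha a"

lemma L0[simp]: "L 0 = 0" by (simp add: L_alpha_def)

lemma L_range: assumes "0 \<le> x" "x \<le> 1" shows "0 \<le> L x" "L x < 1"
proof -
  have "0 \<le> L x \<and> L x < 1"
  proof (cases "x = 0")
    case True thus ?thesis by simp
  next
    case False
    hence x: "0 < x" using assms by simp
    note I = idx_props[OF x assms(2)]
    have an: "a (idx a x) > 0" using apos I(1) .
    have st: "tt a (idx a x) = a (idx a x) + tt a (Suc (idx a x))" using tt_step I(1) .
    show ?thesis using False I an st by (simp add: L_alpha_def divide_simps)
  qed
  thus "0 \<le> L x" "L x < 1" by auto
qed

lemma Lpow_range: "0 \<le> x \<Longrightarrow> x \<le> 1 \<Longrightarrow> 0 \<le> (L^^k) x \<and> (L^^k) x \<le> 1"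
proof (induction k)
  case 0 thus ?case by simp
next
  case (Suc k)
  hence "0 \<le> L ((L^^k) x)" "L ((L^^k) x) < 1" using L_range by auto
  thus ?case by simp
qed

lemma Lpow0: "(L^^k) 0 = 0" by (induction k) auto

lemma Lpow_nz: "(L^^j) x \<noteq> 0 \<Longrightarrow> i \<le> j \<Longrightarrow> (L^^i) x \<noteq> 0"
proof -
  assume h: "(L^^j) x \<noteq> 0" "i \<le> j"
  then obtain d where "j = d + i" by (metis le_add_diff_inverse2)
  hence "(L^^j) x = (L^^d) ((L^^i) x)" by (simp add: funpow_add)
  thus ?thesis using h Lpow0 by metis
qed

lemma digit_ge1: assumes "0 \<le> x" "x \<le> 1" "(L^^(i-1)) x \<noteq> 0" shows "luroth_digit a x i \<ge> 1"
proof -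
  have "0 \<le> (L^^(i-1)) x \<and> (L^^(i-1)) x \<le> 1" using Lpow_range assms by blast
  thus ?thesis unfolding luroth_digit_def using idx_props(1) assms(3) by force
qed

lemma theta_term_bound: assumes "0 \<le> x" "x \<le> 1" shows "\<bar>theta_term a x k\<bar> \<le> (1/2)^k"
proof (cases "(L^^(k-1)) x \<noteq> 0")
  case True
  have "(\<Sum>i=1..k. luroth_digit a x i) \<ge> (\<Sum>i=1..k. (1::nat))"
  proof (rule sum_mono)
    fix i assume "i \<in> {1..k}"
    hence "(L^^(i-1)) x \<noteq> 0" using Lpow_nz[OF True] by auto
    thus "1 \<le> luroth_digit a x i" using digit_ge1 assms by blast
  qed
  hence "(\<Sum>i=1..k. luroth_digit a x i) \<ge> k" by simp
  hence "((1::real)/2)^(\<Sum>i=1..k. luroth_digit a x i) \<le> (1/2)^k"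
    by (intro power_decreasing) auto
  thus ?thesis using True by (simp add: theta_term_def abs_mult power_abs)
next
  case False thus ?thesis by (simp add: theta_term_def)
qed

lemma theta_summable: assumes "0 \<le> x" "x \<le> 1" shows "summable (\<lambda>k. theta_term a x (Suc k))"
proof (rule summable_comparison_test)
  show "\<exists>N. \<forall>n\<ge>N. norm (theta_term a x (Suc n)) \<le> (1/2)^n"
  proof (intro exI allI impI)
    fix n
    have "\<bar>theta_term a x (Suc n)\<bar> \<le> (1/2)^(Suc n)" by (rule theta_term_bound[OF assms])
    also have "\<dots> \<le> (1/2)^n" by (rule power_decreasing) auto
    finally show "norm (theta_term a x (Suc n)) \<le> (1/2)^n" by simp
  qed
  show "summable (\<lambda>n. (1/2::real)^n)" by (rule summable_geometric) simp
qed

lemma theta_bound: assumes "0 \<le> x" "x \<le> 1" shows "\<bar>\<phi> x\<bar> \<le> 4"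
proof -
  have s: "summable (\<lambda>n. (1/2::real)^n)" by (rule summable_geometric) simp
  have g: "(\<Sum>n. (1/2::real)^n) = 2" using suminf_geometric[of "1/2::real"] by simp
  have b: "\<bar>theta_term a x (Suc n)\<bar> \<le> (1/2)^n" for n
  proof -
    have "\<bar>theta_term a x (Suc n)\<bar> \<le> (1/2)^(Suc n)" by (rule theta_term_bound[OF assms])
    also have "\<dots> \<le> (1/2)^n" by (rule power_decreasing) auto
    finally show ?thesis .
  qed
  have "(\<Sum>k. theta_term a x (Suc k)) \<le> (\<Sum>n. (1/2::real)^n)"
    by (rule suminf_le) (use b theta_summable[OF assms] s in \<open>auto simp: abs_le_iff\<close>)
  moreover have "(\<Sum>n. - ((1/2::real)^n)) \<le> (\<Sum>k. theta_term a x (Suc k))"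
  proof (rule suminf_le)
    show "\<And>n. - ((1/2::real)^n) \<le> theta_term a x (Suc n)" using b by (simp add: abs_le_iff) (metis minus_le_iff)
    show "summable (\<lambda>n. - ((1/2::real)^n))" using summable_minus[OF s] .
  qed (rule theta_summable[OF assms])
  moreover have "(\<Sum>n. - ((1/2::real)^n)) = -2" using suminf_minus[OF s] g by simp
  ultimately show ?thesis unfolding theta_alpha_def using g by auto
qed

lemma theta0[simp]: "\<phi> 0 = 0" by (simp add: theta_alpha_def)

lemma theta_term_0: "theta_term a 0 k = 0" by (simp add: theta_term_def Lpow0)

lemma theta_term_shift: assumes "0 < x" "x \<le> 1"
  shows "theta_term a x (Suc (Suc k)) = - (((1::real)/2)^(idx a x)) * theta_term a (L x) (Suc k)"
proof -
  have pw: "(L^^(Suc k)) x = (L^^k) (L x)" by (simp add: funpow_Suc_right del: funpow.simps)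
  have dig: "luroth_digit a x (Suc i) = luroth_digit a (L x) i" if i1: "i \<ge> 1" for i
  proof -
    obtain j where "i = Suc j" using i1 by (cases i) auto
    thus ?thesis unfolding luroth_digit_def by (simp add: funpow_Suc_right del: funpow.simps)
  qed
  have d1: "luroth_digit a x 1 = idx a x" by (simp add: luroth_digit_def)
  have sum: "(\<Sum>i=1..Suc (Suc k). luroth_digit a x i) = idx a x + (\<Sum>i=1..Suc k. luroth_digit a (L x) i)"
  proof -
    have "(\<Sum>i=1..Suc (Suc k). luroth_digit a x i) = luroth_digit a x 1 + (\<Sum>i=Suc 1..Suc (Suc k). luroth_digit a x i)"
      by (rule sum.atLeast_Suc_atMost) simp
    also have "(\<Sum>i=Suc 1..Suc (Suc k). luroth_digit a x i) = (\<Sum>i=1..Suc k. luroth_digit a x (Suc i))"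
      by (rule sum.shift_bounds_cl_Suc_ivl)
    also have "\<dots> = (\<Sum>i=1..Suc k. luroth_digit a (L x) i)" by (rule sum.cong) (auto simp: dig)
    finally show ?thesis using d1 by simp
  qed
  show ?thesis unfolding theta_term_def using pw sum by (simp add: power_add)
qed

lemma theta_rec: assumes "0 < x" "x \<le> 1"
  shows "\<phi> x = 2 * (1/2)^(idx a x) * (1 - \<phi> (L x) / 2)"
proof -
  let ?n = "idx a x"
  have x01: "0 \<le> x" using assms by simp
  have Lr: "0 \<le> L x" "L x \<le> 1" using L_range[OF x01 assms(2)] by auto
  have s: "summable (\<lambda>k. theta_term a x (Suc k))" by (rule theta_summable) (use assms in auto)
  have s2: "summable (\<lambda>k. theta_term a (L x) (Suc k))" by (rule theta_summable[OF Lr])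
  have "(\<Sum>k. theta_term a x (Suc k)) = theta_term a x 1 + (\<Sum>k. theta_term a x (Suc (Suc k)))"
    using suminf_split_head[OF s] by simp
  also have "theta_term a x 1 = - ((1/2)^?n)" using assms by (simp add: theta_term_def luroth_digit_def)
  also have "(\<Sum>k. theta_term a x (Suc (Suc k))) = (\<Sum>k. - ((1/2)^?n) * theta_term a (L x) (Suc k))"
    using theta_term_shift[OF assms] by simp
  also have "\<dots> = - ((1/2)^?n) * (\<Sum>k. theta_term a (L x) (Suc k))"
    by (rule suminf_mult[OF s2])
  also have "(\<Sum>k. theta_term a (L x) (Suc k)) = - \<phi> (L x) / 2"
    by (cases "L x = 0") (simp_all add: theta_alpha_def theta_term_0)
  finally show ?thesis using assms unfolding theta_alpha_def by (simp add: algebra_simps)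
qed

end



lemma small_le: fixes z c :: real assumes "\<And>k. z \<le> c * (1/2)^k" shows "z \<le> 0"
proof (rule ccontr)
  assume z: "\<not> z \<le> 0"
  show False
  proof (cases "c > 0")
    case True
    obtain n where "(1/2::real)^n < z / c" using real_arch_pow_inv[of "z/c" "1/2"] z True by auto
    hence "c * (1/2)^n < z" using True by (simp add: field_simps)
    thus False using assms[of n] by simp
  next
    case False thus False using assms[of 0] z by simp
  qed
qed

context AP begin

lemma tt_in_AA: "n \<ge> 1 \<Longrightarrow> tt a n \<in> AA a n"
  unfolding AA_def using tt_less[of n "Suc n"] by simp

lemma tt_le1: "n \<ge> 1 \<Longrightarrow> tt a n \<le> 1" using tt_le[of 1 n] tt1 by simp

lemma idx_tt: "n \<ge> 1 \<Longrightarrow> idx a (tt a n) = n" using idx_eq tt_in_AA by blast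

lemma L_tt: "n \<ge> 1 \<Longrightarrow> L (tt a n) = 0"
  using tt_pos[of n] by (simp add: L_alpha_def idx_tt)

lemma theta_tt: "n \<ge> 1 \<Longrightarrow> \<phi> (tt a n) = 2 * (1/2)^n"
  using theta_rec[of "tt a n"] tt_pos[of n] tt_le1[of n] by (simp add: L_tt idx_tt)

lemma theta1: "\<phi> 1 = 1" using theta_tt[of 1] tt1 by simp

lemma theta_range_k: "0 \<le> x \<Longrightarrow> x \<le> 1 \<Longrightarrow> - 4 * (1/2)^k \<le> \<phi> x \<and> \<phi> x \<le> 1 + 4 * (1/2)^k"
proof (induction k arbitrary: x)
  case 0 thus ?case using theta_bound[of x] by (auto simp: abs_le_iff)
next
  case (Suc k)
  show ?case
  proof (cases "x = 0")
    case True thus ?thesis by simp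
  next
    case False
    hence x: "0 < x" using Suc.prems by simp
    define c where "c = 2 * (1/2::real)^(idx a x)"
    have n1: "idx a x \<ge> 1" using idx_props(1)[OF x Suc.prems(2)] .
    have c0: "0 < c" unfolding c_def by simp
    have c1: "c \<le> 1"
    proof -
      have "(1/2::real)^(idx a x) \<le> (1/2)^1" by (rule power_decreasing[OF n1]) auto
      thus ?thesis unfolding c_def by simp
    qed
    have rec: "\<phi> x = c * (1 - \<phi> (L x) / 2)" unfolding c_def by (rule theta_rec[OF x Suc.prems(2)])
    have IH: "- 4 * (1/2)^k \<le> \<phi> (L x) \<and> \<phi> (L x) \<le> 1 + 4 * (1/2)^k"
      using Suc.IH L_range[OF Suc.prems] by (simp add: less_imp_le)
    define e where "e = (1/2::real)^k"
    have e0: "e \<ge> 0" unfolding e_def by simp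
    have IH': "- 4 * e \<le> \<phi> (L x)" "\<phi> (L x) \<le> 1 + 4 * e" using IH unfolding e_def by auto
    have up: "\<phi> x \<le> 1 + 2 * e"
    proof -
      have "1 - \<phi> (L x) / 2 \<le> 1 + 2 * e" using IH' by simp
      hence "c * (1 - \<phi> (L x) / 2) \<le> c * (1 + 2 * e)" using c0 by (intro mult_left_mono) auto
      also have "\<dots> \<le> 1 * (1 + 2 * e)" using c1 e0 by (intro mult_right_mono) auto
      finally show ?thesis using rec by simp
    qed
    have lo: "- 2 * e \<le> \<phi> x"
    proof -
      have h: "1 - \<phi> (L x) / 2 \<ge> 1/2 - 2 * e" using IH' by simp
      show ?thesis
      proof (cases "1 - \<phi> (L x) / 2 \<ge> 0")
        case True
        have "0 \<le> c * (1 - \<phi> (L x) / 2)" using True c0 by simp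
        thus ?thesis using rec e0 by simp
      next
        case False
        have "c * (1 - \<phi> (L x) / 2) \<ge> 1 * (1 - \<phi> (L x) / 2)"
          using False c1 by (intro mult_right_mono_neg) auto
        thus ?thesis using h rec by simp
      qed
    qed
    show ?thesis using up lo unfolding e_def by simp
  qed
qed

lemma theta_range: assumes "0 \<le> x" "x \<le> 1" shows "0 \<le> \<phi> x" "\<phi> x \<le> 1"
proof -
  have "- \<phi> x \<le> 0"
  proof (rule small_le[of _ 4])
    fix k show "- \<phi> x \<le> 4 * (1/2)^k" using theta_range_k[OF assms, of k] by simp
  qed
  thus "0 \<le> \<phi> x" by simp
  have "\<phi> x - 1 \<le> 0"
  proof (rule small_le[of _ 4])
    fix k show "\<phi> x - 1 \<le> 4 * (1/2)^k" using theta_range_k[OF assms, of k] by simp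
  qed
  thus "\<phi> x \<le> 1" by simp
qed

lemma theta_pos: assumes "0 < x" "x \<le> 1" shows "\<phi> x \<ge> (1/2)^(idx a x)"
proof -
  have "\<phi> (L x) \<le> 1" using theta_range L_range assms by (simp add: less_imp_le)
  thus ?thesis using theta_rec[OF assms] by simp
qed

lemma theta_upper: assumes "0 < x" "x \<le> 1" shows "\<phi> x \<le> 2 * (1/2)^(idx a x)"
proof -
  have "\<phi> (L x) \<ge> 0" using theta_range L_range assms by (simp add: less_imp_le)
  thus ?thesis using theta_rec[OF assms] by (simp add: mult_left_le)
qed

lemma idx_mono: assumes "0 < x" "x \<le> y" "y \<le> 1" shows "idx a y \<le> idx a x"
proof (rule ccontr)
  assume "\<not> idx a y \<le> idx a x"
  hence "Suc (idx a x) \<le> idx a y" by simp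
  hence "tt a (idx a y) \<le> tt a (Suc (idx a x))" by (rule tt_le[rotated]) simp
  thus False using idx_props[OF assms(1)] idx_props[of y] assms by simp
qed

lemma theta_mono_k: "0 \<le> x \<Longrightarrow> x \<le> y \<Longrightarrow> y \<le> 1 \<Longrightarrow> \<phi> x \<le> \<phi> y + (1/2)^k"
proof (induction k arbitrary: x y)
  case 0 thus ?case using theta_range[of x] theta_range[of y] by simp
next
  case (Suc k)
  show ?case
  proof (cases "x = 0")
    case True thus ?thesis using theta_range[of y] Suc.prems by simp
  next
    case False
    hence x: "0 < x" using Suc.prems by simp
    have y: "0 < y" using x Suc.prems by simp
    have x1: "x \<le> 1" using Suc.prems by simp
    have mn: "idx a y \<le> idx a x" by (rule idx_mono) (use x Suc.prems in auto)
    show ?thesis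
    proof (cases "idx a y = idx a x")
      case True
      let ?n = "idx a x"
      have an: "a ?n > 0" using apos idx_props(1)[OF x x1] by blast
      have "L y \<le> L x" using True Suc.prems x y an by (simp add: L_alpha_def divide_right_mono)
      moreover have "0 \<le> L y" "L x \<le> 1" using L_range x Suc.prems by (auto simp: less_imp_le)
      ultimately have IH: "\<phi> (L y) \<le> \<phi> (L x) + (1/2)^k" using Suc.IH by blast
      have "\<phi> x - \<phi> y = (1/2)^?n * (\<phi> (L y) - \<phi> (L x))"
        using theta_rec[OF x x1] theta_rec[OF y Suc.prems(3)] True by (simp add: algebra_simps)
      also have "\<dots> \<le> (1/2)^?n * (1/2)^k" using IH by (intro mult_left_mono) auto
      also have "\<dots> \<le> (1/2)^1 * (1/2)^k"
        using idx_props(1)[OF x x1] by (intro mult_right_mono power_decreasing) auto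
      finally show ?thesis by simp
    next
      case False
      hence "Suc (idx a y) \<le> idx a x" using mn by simp
      hence "(1/2::real)^(idx a x) \<le> (1/2)^(Suc (idx a y))" by (intro power_decreasing) auto
      hence "\<phi> x \<le> \<phi> y" using theta_upper[OF x x1] theta_pos[OF y Suc.prems(3)] by simp
      thus ?thesis by (simp add: add_increasing2)
    qed
  qed
qed

lemma theta_mono: assumes "0 \<le> x" "x \<le> y" "y \<le> 1" shows "\<phi> x \<le> \<phi> y"
proof -
  have "\<phi> x - \<phi> y \<le> 0"
  proof (rule small_le[of _ 1])
    fix k show "\<phi> x - \<phi> y \<le> 1 * (1/2)^k" using theta_mono_k[OF assms, of k] by simp
  qed
  thus ?thesis by simp
qed

lemma theta_zero_iff: assumes "0 \<le> v" "v \<le> 1" "\<phi> v = 0" shows "v = 0"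
proof (rule ccontr)
  assume "v \<noteq> 0"
  hence "\<phi> v \<ge> (1/2)^(idx a v)" using theta_pos[of v] assms by simp
  moreover have "(1/2::real)^(idx a v) > 0" by simp
  ultimately show False using assms by simp
qed

lemma theta_one_iff: assumes "0 \<le> w" "w < 1" "\<phi> w = 1" shows False
proof -
  have w: "0 < w" using assms theta0 by (cases "w = 0") auto
  have w1: "w \<le> 1" using assms by simp
  let ?m = "idx a w"
  show False
  proof (cases "?m = 1")
    case False
    hence "2 \<le> ?m" using idx_props(1)[OF w w1] by simp
    hence "(1/2::real)^?m \<le> (1/2)^2" by (intro power_decreasing) auto
    hence "2 * (1/2::real)^?m \<le> 1/2" by (simp only: power2_eq_square)
    hence "\<phi> w \<le> 1/2" using theta_upper[OF w w1] by linarith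
    thus False using assms by simp
  next
    case True
    have "\<phi> (L w) = 0" using theta_rec[OF w w1] True assms by simp
    moreover have "L w = (1 - w) / a 1" using True w tt1 by (simp add: L_alpha_def)
    moreover have "(1 - w) / a 1 > 0" using apos[of 1] assms by simp
    ultimately show False using theta_zero_iff[of "L w"] L_range[of w] w w1 assms(2) apos[of 1] by simp
  qed
qed

lemma theta_strict_k: "0 \<le> x \<Longrightarrow> x < y \<Longrightarrow> y \<le> 1 \<Longrightarrow> \<phi> x = \<phi> y \<Longrightarrow> y - x \<le> (1 - min (a 1) (a 2))^k"
proof (induction k arbitrary: x y)
  case 0 thus ?case by simp
next
  case (Suc k)
  have y: "0 < y" "y \<le> 1" using Suc.prems by auto
  let ?n = "idx a y"
  note I = idx_props[OF y]
  have x0: "x \<noteq> 0" using Suc.prems theta_zero_iff[of y] y by auto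
  hence x: "0 < x" using Suc.prems by simp
  show ?case
  proof (cases "x \<le> tt a (Suc ?n)")
    case True
    have t1: "tt a (Suc ?n) \<le> 1" by (rule tt_le1) simp
    have "\<phi> x \<le> \<phi> (tt a (Suc ?n))" by (rule theta_mono) (use True Suc.prems t1 in auto)
    moreover have "\<phi> (tt a (Suc ?n)) \<le> \<phi> y"
      by (rule theta_mono) (use I y tt_pos[of "Suc ?n"] tt_le1[of "Suc ?n"] in \<open>auto simp: less_imp_le\<close>)
    ultimately have "\<phi> y = 2 * (1/2)^(Suc ?n)" using Suc.prems theta_tt[of "Suc ?n"] by simp
    hence "\<phi> (L y) = 1" using theta_rec[OF y] by simp
    thus ?thesis using theta_one_iff[of "L y"] L_range[of y] y by simp
  next
    case False
    hence xA: "x \<in> AA a ?n" using I Suc.prems unfolding AA_def by auto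
    hence ix: "idx a x = ?n" using idx_eq I(1) by blast
    have an: "a ?n > 0" using apos I(1) by blast
    have "\<phi> (L x) = \<phi> (L y)" using theta_rec[OF x] theta_rec[OF y] ix Suc.prems by simp
    moreover have "L y < L x" using ix Suc.prems an x0 by (simp add: L_alpha_def divide_strict_right_mono)
    moreover have "0 \<le> L y" "L x \<le> 1" using L_range x y Suc.prems by (auto simp: less_imp_le)
    ultimately have "L x - L y \<le> (1 - min (a 1) (a 2))^k" using Suc.IH by metis
    moreover have "L x - L y = (y - x) / a ?n" using ix x0 y by (simp add: L_alpha_def diff_divide_distrib)
    ultimately have "y - x \<le> a ?n * (1 - min (a 1) (a 2))^k" using an by (simp add: divide_le_eq mult.commute)
    also have "\<dots> \<le> (1 - min (a 1) (a 2)) * (1 - min (a 1) (a 2))^k"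
      by (rule mult_right_mono[OF a_le_q[OF I(1)]]) (use q_ge0 in simp)
    finally show ?thesis by simp
  qed
qed

lemma theta_strict: assumes "0 \<le> x" "x < y" "y \<le> 1" shows "\<phi> x < \<phi> y"
proof (rule ccontr)
  assume "\<not> \<phi> x < \<phi> y"
  hence eq: "\<phi> x = \<phi> y" using theta_mono[of x y] assms by simp
  let ?q = "1 - min (a 1) (a 2)"
  have "y - x > 0" using assms by simp
  then obtain k where "?q^k < y - x" using real_arch_pow_inv q_lt1 by blast
  thus False using theta_strict_k[OF assms eq, of k] by simp
qed

end



lemma mono_dense_cont:
  fixes f :: "real \<Rightarrow> real"
  assumes mono: "\<And>x y. 0 \<le> x \<Longrightarrow> x \<le> y \<Longrightarrow> y \<le> 1 \<Longrightarrow> f x \<le> f y"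
    and rng: "\<And>x. 0 \<le> x \<Longrightarrow> x \<le> 1 \<Longrightarrow> 0 \<le> f x \<and> f x \<le> 1"
    and dense: "\<And>c d. 0 \<le> c \<Longrightarrow> c < d \<Longrightarrow> d \<le> 1 \<Longrightarrow> \<exists>w. 0 \<le> w \<and> w \<le> 1 \<and> c < f w \<and> f w < d"
  shows "continuous_on {0..1} f"
  unfolding continuous_on_iff
proof (intro ballI allI impI)
  fix x e :: real assume x: "x \<in> {0..1}" and e: "0 < e"
  let ?y = "f x"
  have y: "0 \<le> ?y" "?y \<le> 1" using rng x by auto
  obtain w1 where w1: "w1 < x" "\<forall>x'. 0 \<le> x' \<and> w1 < x' \<and> x' \<le> x \<longrightarrow> ?y - e < f x'"
  proof (cases "?y = 0")
    case True
    have "\<forall>x'. 0 \<le> x' \<and> x - 1 < x' \<and> x' \<le> x \<longrightarrow> ?y - e < f x'"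
    proof (intro allI impI)
      fix x' assume h: "0 \<le> x' \<and> x - 1 < x' \<and> x' \<le> x"
      have "0 \<le> f x'" using rng[of x'] h x by simp
      thus "?y - e < f x'" using True e by simp
    qed
    thus ?thesis by (intro that[of "x - 1"]) simp_all
  next
    case False
    obtain w where w: "0 \<le> w" "w \<le> 1" "max 0 (?y - e) < f w" "f w < ?y"
      using dense[of "max 0 (?y - e)" ?y] False y e by auto
    have wx: "w < x"
    proof (rule ccontr)
      assume "\<not> w < x" hence "f x \<le> f w" using mono[of x w] w x by simp
      thus False using w by simp
    qed
    have "\<forall>x'. 0 \<le> x' \<and> w < x' \<and> x' \<le> x \<longrightarrow> ?y - e < f x'"
    proof (intro allI impI)
      fix x' assume h: "0 \<le> x' \<and> w < x' \<and> x' \<le> x"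
      have "f w \<le> f x'" using mono[of w x'] h w x by simp
      thus "?y - e < f x'" using w by simp
    qed
    thus ?thesis using wx by (intro that[of w]) simp_all
  qed
  obtain w2 where w2: "x < w2" "\<forall>x'. x \<le> x' \<and> x' < w2 \<and> x' \<le> 1 \<longrightarrow> f x' < ?y + e"
  proof (cases "?y = 1")
    case True
    have "\<forall>x'. x \<le> x' \<and> x' < x + 1 \<and> x' \<le> 1 \<longrightarrow> f x' < ?y + e"
    proof (intro allI impI)
      fix x' assume h: "x \<le> x' \<and> x' < x + 1 \<and> x' \<le> 1"
      have "f x' \<le> 1" using rng[of x'] h x by simp
      thus "f x' < ?y + e" using True e by simp
    qed
    thus ?thesis by (intro that[of "x + 1"]) simp_all
  next
    case False
    obtain w where w: "0 \<le> w" "w \<le> 1" "?y < f w" "f w < min 1 (?y + e)"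
      using dense[of ?y "min 1 (?y + e)"] False y e by auto
    have wx: "x < w"
    proof (rule ccontr)
      assume "\<not> x < w" hence "f w \<le> f x" using mono[of w x] w x by simp
      thus False using w by simp
    qed
    have "\<forall>x'. x \<le> x' \<and> x' < w \<and> x' \<le> 1 \<longrightarrow> f x' < ?y + e"
    proof (intro allI impI)
      fix x' assume h: "x \<le> x' \<and> x' < w \<and> x' \<le> 1"
      have "f x' \<le> f w" using mono[of x' w] h w x by simp
      thus "f x' < ?y + e" using w by simp
    qed
    thus ?thesis using wx by (intro that[of w]) simp_all
  qed
  show "\<exists>d>0. \<forall>x'\<in>{0..1}. dist x' x < d \<longrightarrow> dist (f x') (f x) < e"
  proof (intro exI[of _ "min (x - w1) (w2 - x)"] conjI ballI impI)
    show "0 < min (x - w1) (w2 - x)" using w1 w2 by simp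
    fix x' assume x': "x' \<in> {0..1}" "dist x' x < min (x - w1) (w2 - x)"
    show "dist (f x') (f x) < e"
    proof (cases "x' \<le> x")
      case True
      have "f x' \<le> ?y" using mono[of x' x] True x x' by auto
      moreover have "?y - e < f x'" using w1(2) x' True by (auto simp: dist_real_def)
      ultimately show ?thesis by (simp add: dist_real_def)
    next
      case False
      have "?y \<le> f x'" using mono[of x x'] False x x' by auto
      moreover have "f x' < ?y + e" using w2(2) x' False by (auto simp: dist_real_def)
      ultimately show ?thesis by (simp add: dist_real_def)
    qed
  qed
qed

context AP begin

lemma theta_dyadic: "j \<le> 2^m \<Longrightarrow> \<exists>w. 0 \<le> w \<and> w \<le> 1 \<and> \<phi> w = real j / 2^m"
proof (induction m arbitrary: j)
  case 0
  hence "j = 0 \<or> j = 1" by auto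
  thus ?case using theta1 by (auto intro: exI[of _ 0] exI[of _ 1])
next
  case (Suc m)
  show ?case
  proof (cases "j = 0")
    case True thus ?thesis by (auto intro: exI[of _ 0])
  next
    case j0: False
    show ?thesis
    proof (cases "j \<le> 2^m")
      case True
      obtain w where w: "0 \<le> w" "w \<le> 1" "\<phi> w = real j / 2^m" using Suc.IH[OF True] by blast
      have wpos: "0 < w" using w j0 by (cases "w = 0") auto
      let ?n = "idx a w"
      let ?u = "L w"
      have u: "0 \<le> ?u" "?u < 1" using L_range w by auto
      define x where "x = tt a (Suc ?n) - a (Suc ?n) * ?u"
      have st: "tt a (Suc ?n) = a (Suc ?n) + tt a (Suc (Suc ?n))" by (rule tt_step) simp
      have as: "a (Suc ?n) > 0" by (rule apos) simp
      have xA: "x \<in> AA a (Suc ?n)" unfolding AA_def x_def using st as u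
        by (auto simp: mult_less_cancel_left2 mult_nonneg_nonneg)
      have ix: "idx a x = Suc ?n" by (rule idx_eq[OF _ xA]) simp
      have x0: "0 < x" using xA tt_nonneg[of "Suc (Suc ?n)"] unfolding AA_def by auto
      have x1: "x \<le> 1" using xA tt_le1[of "Suc ?n"] unfolding AA_def by auto
      have "L x = (tt a (Suc ?n) - x) / a (Suc ?n)" using x0 ix by (simp add: L_alpha_def)
      also have "\<dots> = ?u" using as unfolding x_def by simp
      finally have Lx: "L x = ?u" .
      have "\<phi> x = \<phi> w / 2" using theta_rec[OF x0 x1] theta_rec[OF wpos w(2)] ix Lx by simp
      thus ?thesis using w x0 x1 by (intro exI[of _ x]) simp
    next
      case False
      define j' where "j' = 2^(Suc m) - j"
      have j'le: "j' \<le> 2^m" using False Suc.prems unfolding j'_def by simp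
      have rj': "real j' = 2^(Suc m) - real j" using Suc.prems unfolding j'_def by (simp add: of_nat_diff)
      obtain w where w: "0 \<le> w" "w \<le> 1" "\<phi> w = real j' / 2^m" using Suc.IH[OF j'le] by blast
      have "real j' < 2^m" using False Suc.prems rj' by simp
      hence "\<phi> w < 1" using w(3) by (simp add: divide_less_eq)
      hence w1: "w < 1" using w theta1 by (cases "w = 1") auto
      define x where "x = 1 - a 1 * w"
      have st: "tt a 1 = a 1 + tt a 2" using tt_step[of 1] by (simp add: numeral_2_eq_2)
      have as: "a 1 > 0" by (rule apos) simp
      have "a 1 * w < a 1" using as w1 by simp
      moreover have "0 \<le> a 1 * w" using as w by simp
      ultimately have xA: "x \<in> AA a 1" unfolding AA_def x_def using st tt1
        by (simp add: numeral_2_eq_2)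
      have ix: "idx a x = 1" by (rule idx_eq[OF _ xA]) simp
      have x0: "0 < x" using xA tt_nonneg[of 2] unfolding AA_def by (simp add: numeral_2_eq_2)
      have x1: "x \<le> 1" using xA tt1 unfolding AA_def by auto
      have "L x = (tt a 1 - x) / a 1" using x0 ix by (simp add: L_alpha_def)
      also have "\<dots> = w" using as tt1 unfolding x_def by simp
      finally have Lx: "L x = w" .
      have "\<phi> x = 1 - \<phi> w / 2" using theta_rec[OF x0 x1] ix Lx by simp
      also have "\<dots> = real j / 2^(Suc m)" using w(3) rj' by (simp add: field_simps)
      finally show ?thesis using x0 x1 by (intro exI[of _ x]) simp
    qed
  qed
qed

lemma theta_dense: assumes "0 \<le> c" "c < d" "d \<le> 1" shows "\<exists>w. 0 \<le> w \<and> w \<le> 1 \<and> c < \<phi> w \<and> \<phi> w < d"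
proof -
  obtain m where m: "(1/2::real)^m < d - c" using real_arch_pow_inv[of "d - c" "1/2"] assms by auto
  define r where "r = c * 2^m"
  define f where "f = floor r"
  have r0: "0 \<le> r" using assms unfolding r_def by simp
  have f0: "0 \<le> f" using r0 unfolding f_def by simp
  define j where "j = nat f + 1"
  have rj: "real j = of_int f + 1" using f0 unfolding j_def by simp
  have fr: "of_int f \<le> r" "r < of_int f + 1" unfolding f_def by linarith+
  have p: "(2::real)^m > 0" by simp
  have gt: "c < real j / 2^m" using fr rj p unfolding r_def by (simp add: field_simps)
  have "real j / 2^m \<le> (r + 1) / 2^m" using fr rj p by (simp add: divide_right_mono)
  also have "\<dots> = c + (1/2)^m" unfolding r_def by (simp add: field_simps)
  finally have lt: "real j / 2^m < d" using m by simp
  hence "real j < d * 2^m" using p by (simp add: divide_less_eq)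
  also have "\<dots> \<le> 1 * 2^m" using assms p by (intro mult_right_mono) auto
  finally have "real j < real (2^m)" by simp
  hence "j \<le> 2^m" by (simp only: of_nat_less_iff)
  then obtain w where "0 \<le> w" "w \<le> 1" "\<phi> w = real j / 2^m" using theta_dyadic by blast
  thus ?thesis using gt lt by auto
qed

lemma theta_cont: "continuous_on {0..1} \<phi>"
  by (rule mono_dense_cont) (use theta_mono theta_range theta_dense in auto)

lemma theta_image: "\<phi> ` {0..1} = {0..1}"
proof
  show "\<phi> ` {0..1} \<subseteq> {0..1}" using theta_range by auto
  show "{0..1} \<subseteq> \<phi> ` {0..1}"
  proof
    fix y :: real assume "y \<in> {0..1}"
    then obtain x where "x \<ge> 0" "x \<le> 1" "\<phi> x = y"
      using IVT'[of \<phi> 0 y 1] theta_cont theta1 by auto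
    thus "y \<in> \<phi> ` {0..1}" by force
  qed
qed

lemma theta_inj: "inj_on \<phi> {0..1}"
proof (rule inj_onI)
  fix x y assume "x \<in> {0..1}" "y \<in> {0..1}" "\<phi> x = \<phi> y"
  thus "x = y" using theta_strict[of x y] theta_strict[of y x] by (cases x y rule: linorder_cases) auto
qed

lemma theta_homeo: "\<exists>g. homeomorphism {0..1} {0..1} \<phi> g"
  by (rule homeomorphism_compact) (auto simp: theta_cont theta_image theta_inj)

end



lemma tent_eq: "tent x = 1 - \<bar>2 * x - 1\<bar>" by (simp add: tent_def)

lemma tent_range: "0 \<le> u \<Longrightarrow> u \<le> 1 \<Longrightarrow> 0 \<le> tent u \<and> tent u \<le> 1"
  by (simp add: tent_eq)

lemma tent_meas: "tent \<in> borel_measurable borel"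
  unfolding tent_eq[abs_def] by measurable

fun tcyl :: "bool list \<Rightarrow> real set" where
  "tcyl [] = {0..1}"
| "tcyl (b # xs) = {u \<in> {0..1}. (u > 1/2 \<longleftrightarrow> b) \<and> tent u \<in> tcyl xs}"

fun itin :: "nat \<Rightarrow> real \<Rightarrow> bool list" where
  "itin 0 u = []"
| "itin (Suc n) u = (u > 1/2) # itin n (tent u)"

lemma tcyl_sub: "tcyl xs \<subseteq> {0..1}" by (cases xs) auto

lemma tcyl_meas: "tcyl xs \<in> sets borel"
proof (induction xs)
  case Nil thus ?case by simp
next
  case (Cons b xs)
  have "tcyl (b # xs) = {0..1} \<inter> (if b then {1/2<..} else {..1/2}) \<inter> tent -` tcyl xs"
    by auto
  moreover have "tent -` tcyl xs \<in> sets borel"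
    using measurable_sets[OF tent_meas Cons] by simp
  ultimately show ?case by simp
qed

lemma itin_len: "length (itin n u) = n" by (induction n arbitrary: u) auto

lemma itin_in: "0 \<le> u \<Longrightarrow> u \<le> 1 \<Longrightarrow> u \<in> tcyl (itin n u)"
  by (induction n arbitrary: u) (auto simp: tent_range)

lemma tcyl_in_dyadic: "j < 2^n \<Longrightarrow> \<exists>xs. length xs = n \<and> tcyl xs \<subseteq> {real j / 2^n .. (real j + 1) / 2^n}"
proof (induction n arbitrary: j)
  case 0 thus ?case by (intro exI[of _ "[]"]) auto
next
  case (Suc n)
  show ?case
  proof (cases "j < 2^n")
    case True
    obtain xs where xs: "length xs = n" "tcyl xs \<subseteq> {real j / 2^n .. (real j + 1) / 2^n}"
      using Suc.IH[OF True] by blast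
    have "tcyl (False # xs) \<subseteq> {real j / 2^Suc n .. (real j + 1) / 2^Suc n}"
    proof
      fix u assume u: "u \<in> tcyl (False # xs)"
      hence "u \<le> 1/2" "tent u \<in> tcyl xs" by auto
      moreover hence "tent u = 2 * u" by (auto simp: tent_def)
      ultimately have "2 * u \<in> {real j / 2^n .. (real j + 1) / 2^n}" using xs by auto
      thus "u \<in> {real j / 2^Suc n .. (real j + 1) / 2^Suc n}" by (auto simp: field_simps)
    qed
    thus ?thesis using xs by (intro exI[of _ "False # xs"]) simp
  next
    case False
    define j' where "j' = 2^Suc n - 1 - j"
    have j': "j' < 2^n" using False Suc.prems unfolding j'_def by simp
    have rj: "real j' = 2^Suc n - 1 - real j" using Suc.prems unfolding j'_def by (simp add: of_nat_diff)
    obtain xs where xs: "length xs = n" "tcyl xs \<subseteq> {real j' / 2^n .. (real j' + 1) / 2^n}"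
      using Suc.IH[OF j'] by blast
    have "tcyl (True # xs) \<subseteq> {real j / 2^Suc n .. (real j + 1) / 2^Suc n}"
    proof
      fix u assume u: "u \<in> tcyl (True # xs)"
      hence "u > 1/2" "tent u \<in> tcyl xs" by auto
      moreover hence "tent u = 2 - 2 * u" by (auto simp: tent_def)
      ultimately have "2 - 2 * u \<in> {real j' / 2^n .. (real j' + 1) / 2^n}" using xs by auto
      thus "u \<in> {real j / 2^Suc n .. (real j + 1) / 2^Suc n}" using rj by (auto simp: field_simps)
    qed
    thus ?thesis using xs by (intro exI[of _ "True # xs"]) simp
  qed
qed

lemma tcyl_sandwich: "\<exists>p. 0 \<le> p \<and> p + (1/2)^length xs \<le> 1 \<and>
   {p <..< p + (1/2)^length xs} \<subseteq> tcyl xs \<and> tcyl xs \<subseteq> {p .. p + (1/2)^length xs}"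
proof (induction xs)
  case Nil thus ?case by (intro exI[of _ 0]) auto
next
  case (Cons b xs)
  obtain p where p: "0 \<le> p" "p + (1/2)^length xs \<le> 1"
    "{p <..< p + (1/2)^length xs} \<subseteq> tcyl xs" "tcyl xs \<subseteq> {p .. p + (1/2)^length xs}"
    using Cons.IH by blast
  define h where "h = (1/2::real)^length xs"
  have h0: "0 < h" unfolding h_def by simp
  have lh: "(1/2::real)^length (b # xs) = h / 2" unfolding h_def by simp
  show ?case
  proof (cases b)
    case False
    have A: "{p/2 <..< p/2 + h/2} \<subseteq> tcyl (b # xs)"
    proof
      fix u assume u: "u \<in> {p/2 <..< p/2 + h/2}"
      hence "u < 1/2" using p h_def by auto
      hence "tent u = 2 * u" by (simp add: tent_def)
      moreover have "2 * u \<in> {p <..< p + h}" using u by auto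
      ultimately show "u \<in> tcyl (b # xs)" using p(3) False \<open>u < 1/2\<close> u p(1) h_def by auto
    qed
    have B: "tcyl (b # xs) \<subseteq> {p/2 .. p/2 + h/2}"
    proof
      fix u assume u: "u \<in> tcyl (b # xs)"
      hence "u \<le> 1/2" "tent u \<in> tcyl xs" using False by auto
      moreover hence "tent u = 2 * u" by (auto simp: tent_def)
      ultimately have "2 * u \<in> {p .. p + h}" using p(4) h_def by auto
      thus "u \<in> {p/2 .. p/2 + h/2}" by auto
    qed
    show ?thesis using A B p h0 unfolding lh h_def[symmetric] by (intro exI[of _ "p/2"]) auto
  next
    case True
    define p' where "p' = 1 - (p + h) / 2"
    have A: "{p' <..< p' + h/2} \<subseteq> tcyl (b # xs)"
    proof
      fix u assume u: "u \<in> {p' <..< p' + h/2}"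
      have ph: "p + h \<le> 1" using p(2) h_def by simp
      have "p' < u" using u by simp
      hence "u > 1/2" using ph unfolding p'_def by (simp add: field_simps)
      hence "tent u = 2 - 2 * u" by (simp add: tent_def)
      moreover have "2 - 2 * u \<in> {p <..< p + h}" using u unfolding p'_def by (auto simp: field_simps)
      ultimately show "u \<in> tcyl (b # xs)" using p(3) True \<open>u > 1/2\<close> u p(1) h_def p'_def by auto
    qed
    have B: "tcyl (b # xs) \<subseteq> {p' .. p' + h/2}"
    proof
      fix u assume u: "u \<in> tcyl (b # xs)"
      hence "u > 1/2" "tent u \<in> tcyl xs" using True by auto
      moreover hence "tent u = 2 - 2 * u" by (auto simp: tent_def)
      ultimately have "2 - 2 * u \<in> {p .. p + h}" using p(4) h_def by auto
      thus "u \<in> {p' .. p' + h/2}" unfolding p'_def by (auto simp: field_simps)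
    qed
    show ?thesis using A B p h0 unfolding lh h_def[symmetric] p'_def by (intro exI[of _ "p'"]) (auto simp: p'_def)
  qed
qed



context AP begin

abbreviation "F \<equiv> F_alpha a"

lemma F_props: assumes "0 < x" "x \<le> 1"
  shows "(idx a x = 1 \<and> F x = L x) \<or> (idx a x \<ge> 2 \<and> F x \<in> AA a (idx a x - 1) \<and> L (F x) = L x)"
proof (cases "idx a x = 1")
  case True
  have "x \<noteq> 0" using assms by simp
  hence "F x = (1 - x) / a 1" "L x = (tt a 1 - x) / a 1" using True unfolding F_alpha_def L_alpha_def by simp_all
  thus ?thesis using True tt1 by simp
next
  case False
  let ?n = "idx a x"
  note I = idx_props[OF assms]
  obtain m where m: "?n = Suc m" "m \<ge> 1" using I(1) False by (cases ?n) auto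
  have am: "a m > 0" "a (Suc m) > 0" using apos m by auto
  have s1: "tt a m = a m + tt a (Suc m)" by (rule tt_step[OF m(2)])
  have s2: "tt a (Suc m) = a (Suc m) + tt a (Suc (Suc m))" by (rule tt_step) simp
  have x0: "x \<noteq> 0" using assms by simp
  define r where "r = (x - tt a (Suc (Suc m))) / a (Suc m)"
  have Fx: "F x = a m * (x - tt a (Suc (Suc m))) / a (Suc m) + tt a (Suc m)"
    using x0 False m(1) unfolding F_alpha_def by simp
  have i34: "tt a (Suc (Suc m)) < x" "x \<le> tt a (Suc m)" using I(3) I(4) m(1) by simp_all
  have d: "0 < x - tt a (Suc (Suc m))" "x - tt a (Suc (Suc m)) \<le> a (Suc m)" using i34 s2 by linarith+
  have q: "0 < r" "r \<le> 1" unfolding r_def using d am by (simp_all add: divide_le_eq)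
  have Fx': "F x = a m * r + tt a (Suc m)" using Fx unfolding r_def by simp
  have "a m * r \<le> a m" using q am by (simp add: mult_le_cancel_left1)
  moreover have "0 < a m * r" using q am by simp
  ultimately have FA: "F x \<in> AA a m" unfolding AA_def using Fx' s1 by simp
  have iF: "idx a (F x) = m" using idx_eq m(2) FA by blast
  have F0: "F x \<noteq> 0" using FA tt_nonneg[of "Suc m"] unfolding AA_def by auto
  have "L (F x) = (tt a m - F x) / a m" using F0 iF unfolding L_alpha_def by simp
  also have "tt a m - F x = a m * (1 - r)" using Fx' s1 by (simp add: algebra_simps)
  also have "a m * (1 - r) / a m = 1 - r" using am by simp
  also have "1 - r = (tt a (Suc m) - x) / a (Suc m)" unfolding r_def using s2 am
    by (simp add: diff_divide_distrib add_divide_distrib)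
  also have "\<dots> = L x" using x0 m(1) unfolding L_alpha_def by simp
  finally show ?thesis using FA m by simp
qed

lemma F_range: assumes "0 \<le> x" "x \<le> 1" shows "0 \<le> F x \<and> F x \<le> 1"
proof (cases "x = 0")
  case True thus ?thesis by (simp add: F_alpha_def)
next
  case False
  hence x: "0 < x" using assms by simp
  show ?thesis
  proof (cases "idx a x = 1 \<and> F x = L x")
    case True thus ?thesis using L_range assms by (simp add: less_imp_le)
  next
    case False
    hence h: "idx a x \<ge> 2" "F x \<in> AA a (idx a x - 1)" using F_props[OF x assms(2)] by auto
    have k1: "idx a x - 1 \<ge> 1" "Suc (idx a x - 1) = idx a x" using h(1) by auto
    have "tt a (idx a x) < F x" "F x \<le> tt a (idx a x - 1)" using h(2) k1(2) unfolding AA_def by auto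
    moreover have "tt a (idx a x - 1) \<le> 1" by (rule tt_le1[OF k1(1)])
    moreover have "0 \<le> tt a (idx a x)" using tt_nonneg h(1) by simp
    ultimately show ?thesis by linarith
  qed
qed

lemma theta_conj: assumes "0 \<le> x" "x \<le> 1" shows "\<phi> (F x) = tent (\<phi> x)"
proof (cases "x = 0")
  case True thus ?thesis by (simp add: F_alpha_def tent_def)
next
  case False
  hence x: "0 < x" using assms by simp
  have Lr: "0 \<le> L x" "L x \<le> 1" using L_range assms by (auto simp: less_imp_le)
  have tr: "0 \<le> \<phi> (L x)" "\<phi> (L x) \<le> 1" using theta_range Lr by auto
  show ?thesis
  proof (cases "idx a x = 1 \<and> F x = L x")
    case True
    have r: "\<phi> x = 1 - \<phi> (L x) / 2" using theta_rec[OF x assms(2)] True by simp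
    show ?thesis using True r tr by (simp add: tent_def)
  next
    case False
    hence h: "idx a x \<ge> 2" "F x \<in> AA a (idx a x - 1)" "L (F x) = L x" using F_props[OF x assms(2)] by auto
    obtain m where m: "idx a x = Suc m" "m \<ge> 1" using h(1) by (cases "idx a x") auto
    have iF: "idx a (F x) = m" using idx_eq[of m "F x"] h(2) m by simp
    have Fr: "0 < F x" "F x \<le> 1" using h(2) m tt_nonneg[of "Suc m"] tt_le1[of m] unfolding AA_def by auto
    have "\<phi> (F x) = 2 * (1/2)^m * (1 - \<phi> (L x) / 2)" using theta_rec[OF Fr] iF h(3) by simp
    moreover have px: "\<phi> x = (1/2)^m * (1 - \<phi> (L x) / 2)" using theta_rec[OF x assms(2)] m by simp
    moreover have "\<phi> x \<le> 1/2"
    proof -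
      have "(1/2::real)^m \<le> (1/2)^1" using m by (intro power_decreasing) auto
      moreover have "1 - \<phi> (L x) / 2 \<le> 1" using tr by simp
      ultimately have "(1/2::real)^m * (1 - \<phi> (L x) / 2) \<le> 1/2 * 1"
        using tr by (intro mult_mono) auto
      thus ?thesis using px by simp
    qed
    ultimately show ?thesis by (auto simp: tent_def)
  qed
qed

lemma A1_iff: assumes "0 \<le> y" "y \<le> 1" shows "y \<in> AA a 1 \<longleftrightarrow> \<phi> y > 1/2"
proof -
  have t2: "0 \<le> tt a 2" "tt a 2 \<le> 1" using tt_nonneg[of 2] tt_le1[of 2] by auto
  have p2: "\<phi> (tt a 2) = 1/2" using theta_tt[of 2] by (simp add: power2_eq_square)
  have "y \<in> AA a 1 \<longleftrightarrow> tt a 2 < y" using assms tt1 unfolding AA_def by (simp add: numeral_2_eq_2)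
  also have "\<dots> \<longleftrightarrow> \<phi> y > 1/2"
  proof
    assume "tt a 2 < y" thus "\<phi> y > 1/2" using theta_strict[of "tt a 2" y] t2 assms p2 by simp
  next
    assume "\<phi> y > 1/2" thus "tt a 2 < y" using theta_mono[of y "tt a 2"] t2 assms p2 by (cases "tt a 2 < y") auto
  qed
  finally show ?thesis .
qed

lemma farey_Cons: "farey_cyl a (b # xs) = {y \<in> {0..1}. (y \<in> AA a 1 \<longleftrightarrow> b) \<and> F y \<in> farey_cyl a xs}"
proof (intro set_eqI iffI)
  have fp: "\<And>y k. (F^^(Suc k)) y = (F^^k) (F y)" by (simp add: funpow_Suc_right del: funpow.simps)
  fix y
  {
    assume y: "y \<in> farey_cyl a (b # xs)"
    hence y01: "y \<in> {0..1}" and H: "\<forall>k < Suc (length xs). ((F^^k) y \<in> AA a 1 \<longleftrightarrow> (b # xs) ! k)"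
      unfolding farey_cyl_def by auto
    have "(y \<in> AA a 1 \<longleftrightarrow> b)" using H[rule_format, of 0] by simp
    moreover have "F y \<in> farey_cyl a xs" unfolding farey_cyl_def
    proof (intro CollectI conjI allI impI)
      show "F y \<in> {0..1}" using F_range y01 by auto
      fix k assume "k < length xs"
      thus "((F^^k) (F y) \<in> AA a 1) = xs ! k" using H[rule_format, of "Suc k"] fp by simp
    qed
    ultimately show "y \<in> {y \<in> {0..1}. (y \<in> AA a 1 \<longleftrightarrow> b) \<and> F y \<in> farey_cyl a xs}" using y01 by simp
  }
  {
    assume y: "y \<in> {y \<in> {0..1}. (y \<in> AA a 1 \<longleftrightarrow> b) \<and> F y \<in> farey_cyl a xs}"
    hence y01: "y \<in> {0..1}" and h0: "(y \<in> AA a 1 \<longleftrightarrow> b)"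
      and H: "\<forall>k < length xs. ((F^^k) (F y) \<in> AA a 1 \<longleftrightarrow> xs ! k)"
      unfolding farey_cyl_def by auto
    show "y \<in> farey_cyl a (b # xs)" unfolding farey_cyl_def
    proof (intro CollectI conjI allI impI)
      show "y \<in> {0..1}" by (rule y01)
      fix k assume k: "k < length (b # xs)"
      show "((F^^k) y \<in> AA a 1) = (b # xs) ! k"
      proof (cases k)
        case 0 thus ?thesis using h0 by simp
      next
        case (Suc j) thus ?thesis using H[rule_format, of j] k fp by simp
      qed
    qed
  }
qed

lemma farey_tcyl: "farey_cyl a xs = {y \<in> {0..1}. \<phi> y \<in> tcyl xs}"
proof (induction xs)
  case Nil thus ?case using theta_range by (auto simp: farey_cyl_def)
next
  case (Cons b xs)
  show ?case
  proof (intro set_eqI)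
    fix y
    show "y \<in> farey_cyl a (b # xs) \<longleftrightarrow> y \<in> {y \<in> {0..1}. \<phi> y \<in> tcyl (b # xs)}"
    proof (cases "y \<in> {0..1}")
      case True
      hence y: "0 \<le> y" "y \<le> 1" by auto
      have Fy: "0 \<le> F y" "F y \<le> 1" using F_range[OF y] by auto
      have "y \<in> farey_cyl a (b # xs) \<longleftrightarrow> (y \<in> AA a 1 \<longleftrightarrow> b) \<and> F y \<in> farey_cyl a xs"
        unfolding farey_Cons using True by simp
      also have "\<dots> \<longleftrightarrow> (\<phi> y > 1/2 \<longleftrightarrow> b) \<and> tent (\<phi> y) \<in> tcyl xs"
        unfolding Cons using A1_iff[OF y] theta_conj[OF y] Fy by simp
      also have "\<dots> \<longleftrightarrow> y \<in> {y \<in> {0..1}. \<phi> y \<in> tcyl (b # xs)}"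
        using theta_range[OF y] True by simp
      finally show ?thesis .
    next
      case False
      have "y \<notin> farey_cyl a (b # xs)" using False unfolding farey_cyl_def by blast
      thus ?thesis using False by blast
    qed
  qed
qed

end



lemma lborel_sandwich:
  fixes S :: "real set" assumes "S \<in> sets borel" "{p<..<q} \<subseteq> S" "S \<subseteq> {p..q}" "p \<le> q"
  shows "measure lborel S = q - p"
proof -
  have "emeasure lborel {p<..<q} \<le> emeasure lborel S" using assms by (intro emeasure_mono) auto
  moreover have "emeasure lborel S \<le> emeasure lborel {p..q}" using assms by (intro emeasure_mono) auto
  ultimately have "emeasure lborel S = ennreal (q - p)" using assms(4) by (simp add: antisym)
  thus ?thesis unfolding measure_def using assms(4) by simp
qed

lemma lborel_tcyl: "measure lborel (tcyl xs) = (1/2)^length xs"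
proof -
  obtain p where "0 \<le> p" "p + (1/2)^length xs \<le> 1"
    "{p <..< p + (1/2)^length xs} \<subseteq> tcyl xs" "tcyl xs \<subseteq> {p .. p + (1/2)^length xs}"
    using tcyl_sandwich by blast
  thus ?thesis using lborel_sandwich[OF tcyl_meas] by simp
qed

context AP begin

lemma theta_meas_restr: "\<phi> \<in> borel_measurable (restrict_space borel {0..1})"
  by (rule borel_measurable_continuous_on_restrict[OF theta_cont])

lemma farey_meas: "farey_cyl a xs \<in> sets (restrict_space borel {0..1::real})"
proof -
  have "\<phi> -` tcyl xs \<inter> space (restrict_space borel {0..1::real}) \<in> sets (restrict_space borel {0..1})"
    by (rule measurable_sets[OF theta_meas_restr tcyl_meas])
  moreover have "\<phi> -` tcyl xs \<inter> space (restrict_space borel {0..1::real}) = farey_cyl a xs"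
    unfolding farey_tcyl by auto
  ultimately show ?thesis by simp
qed

lemma mu_exists: "\<exists>\<mu>. is_mu_alpha a \<mu>"
proof -
  obtain g where g: "homeomorphism {0..1} {0..1} \<phi> g" using theta_homeo by blast
  have gc: "continuous_on {0..1} g" and gr: "\<And>u. u \<in> {0..1} \<Longrightarrow> g u \<in> {0..1}"
    and pg: "\<And>u. u \<in> {0..1} \<Longrightarrow> \<phi> (g u) = u"
    using g unfolding homeomorphism_def by auto
  define c :: "real \<Rightarrow> real" where "c u = max 0 (min 1 u)" for u
  have cr: "c u \<in> {0..1}" for u unfolding c_def by auto
  have cc: "continuous_on UNIV c" unfolding c_def by (intro continuous_intros)
  define G where "G u = g (c u)" for u
  have Gc: "continuous_on UNIV G" unfolding G_def
    by (rule continuous_on_compose2[OF gc cc]) (use cr in auto)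
  define U where "U = uniform_measure lborel {0..1::real}"
  have e1: "emeasure lborel {0..1::real} = 1" by simp
  have PU: "prob_space U" unfolding U_def by (rule prob_space_uniform_measure) (simp_all add: e1)
  have sU: "sets U = sets borel" unfolding U_def by simp
  have spU: "space U = UNIV" using sets_eq_imp_space_eq[OF sU] by simp
  have Gm0: "G \<in> borel_measurable borel" by (rule borel_measurable_continuous_onI[OF Gc])
  have Gm1: "G \<in> U \<rightarrow>\<^sub>M borel" using Gm0 measurable_cong_sets[OF sU refl, of borel] by metis
  have Gm: "G \<in> U \<rightarrow>\<^sub>M restrict_space borel {0..1}"
    by (rule measurable_restrict_space2[OF _ Gm1]) (use gr cr in \<open>auto simp: G_def\<close>)
  define \<mu> where "\<mu> = distr U (restrict_space borel {0..1}) G"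
  have "is_mu_alpha a \<mu>" unfolding is_mu_alpha_def
  proof (intro conjI allI)
    show "prob_space \<mu>" unfolding \<mu>_def by (rule prob_space.prob_space_distr[OF PU Gm])
    show "sets \<mu> = sets (restrict_space borel {0..1})" unfolding \<mu>_def by simp
    fix xs
    have "measure \<mu> (farey_cyl a xs) = measure U (G -` farey_cyl a xs \<inter> space U)"
      unfolding \<mu>_def by (rule measure_distr[OF Gm farey_meas])
    also have "G -` farey_cyl a xs \<inter> space U = G -` farey_cyl a xs" by (simp add: spU)
    also have "measure U (G -` farey_cyl a xs) = measure lborel ({0..1} \<inter> (G -` farey_cyl a xs)) / measure lborel {0..1::real}"
      unfolding U_def
    proof (rule measure_uniform_measure)
      show "G -` farey_cyl a xs \<in> sets lborel"
        using measurable_sets[OF Gm farey_meas] sU spU by simp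
    qed (simp_all add: e1)
    also have "{0..1} \<inter> (G -` farey_cyl a xs) = tcyl xs"
    proof (intro set_eqI iffI)
      fix u assume "u \<in> {0..1} \<inter> (G -` farey_cyl a xs)"
      hence u: "u \<in> {0..1}" "G u \<in> farey_cyl a xs" by auto
      have "G u = g u" using u(1) by (simp add: G_def c_def)
      thus "u \<in> tcyl xs" using u pg unfolding farey_tcyl by auto
    next
      fix u assume u: "u \<in> tcyl xs"
      hence u01: "u \<in> {0..1}" using tcyl_sub by blast
      have "G u = g u" using u01 by (simp add: G_def c_def)
      thus "u \<in> {0..1} \<inter> (G -` farey_cyl a xs)" using u u01 pg gr unfolding farey_tcyl by auto
    qed
    finally show "measure \<mu> (farey_cyl a xs) = (1/2)^length xs" by (simp add: lborel_tcyl)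
  qed
  thus ?thesis by blast
qed

end



context AP begin

lemma dist_fun: assumes mu: "is_mu_alpha a \<mu>" and x: "0 \<le> x" "x \<le> 1"
  shows "measure \<mu> {0..x} = \<phi> x"
proof -
  have P: "prob_space \<mu>" and sE: "sets \<mu> = sets (restrict_space borel {0..1::real})"
    and cyl: "\<And>xs. measure \<mu> (farey_cyl a xs) = (1/2)^length xs"
    using mu unfolding is_mu_alpha_def by auto
  have sp: "space \<mu> = {0..1}" using sets_eq_imp_space_eq[OF sE] by simp
  have pm: "\<phi> \<in> \<mu> \<rightarrow>\<^sub>M borel" using theta_meas_restr measurable_cong_sets[OF sE refl, of borel] by metis
  define \<nu> where "\<nu> = distr \<mu> borel \<phi>"
  have Pn: "prob_space \<nu>" unfolding \<nu>_def by (rule prob_space.prob_space_distr[OF P pm])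
  interpret n: prob_space \<nu> by (rule Pn)
  have sn: "sets \<nu> = sets borel" unfolding \<nu>_def by simp
  have mn: "measure \<nu> B = measure \<mu> (\<phi> -` B \<inter> {0..1})" if "B \<in> sets borel" for B
    unfolding \<nu>_def using measure_distr[OF pm that] sp by simp
  have tc: "measure \<nu> (tcyl xs) = (1/2)^length xs" for xs
  proof -
    have "\<phi> -` tcyl xs \<inter> {0..1} = farey_cyl a xs" unfolding farey_tcyl by auto
    thus ?thesis using mn[OF tcyl_meas] cyl by simp
  qed
  have mono: "measure \<nu> A \<le> measure \<nu> B" if "A \<subseteq> B" "B \<in> sets borel" for A B
    using n.finite_measure_mono that sn by simp
  have un: "measure \<nu> (A \<union> B) = measure \<nu> A + measure \<nu> B"
    if "A \<in> sets borel" "B \<in> sets borel" "A \<inter> B = {}" for A B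
    using n.finite_measure_Union that sn by simp
  have pt: "measure \<nu> {u} = 0" if u: "0 \<le> u" "u \<le> 1" for u
  proof -
    have "measure \<nu> {u} \<le> 1 * (1/2)^k" for k
    proof -
      have "measure \<nu> {u} \<le> measure \<nu> (tcyl (itin k u))"
        using itin_in[OF u, of k] by (intro mono tcyl_meas) auto
      thus ?thesis using tc itin_len by simp
    qed
    hence "measure \<nu> {u} \<le> 0" by (rule small_le)
    thus ?thesis using measure_nonneg[of \<nu> "{u}"] by simp
  qed
  have dy: "measure \<nu> {real j / 2^k .. (real j + 1) / 2^k} \<ge> (1/2)^k" if jk: "j < 2^k" for j k
  proof -
    obtain xs where "length xs = k" "tcyl xs \<subseteq> {real j / 2^k .. (real j + 1) / 2^k}"
      using tcyl_in_dyadic[OF jk] by blast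
    thus ?thesis using mono[of "tcyl xs"] tc[of xs] by simp
  qed
  have low: "measure \<nu> {real i / 2^k .. (real i + real m) / 2^k} \<ge> real m / 2^k" if "i + m \<le> 2^k" for i m k
    using that
  proof (induction m)
    case 0 thus ?case by simp
  next
    case (Suc m)
    let ?r = "(real i + real m) / 2^k"
    let ?s = "(real i + real (Suc m)) / 2^k"
    have IH: "measure \<nu> {real i / 2^k .. ?r} \<ge> real m / 2^k" using Suc by simp
    have p: "(2::real)^k > 0" by simp
    have c: "real i + real m \<le> 2^k"
    proof -
      have "i + m \<le> 2^k" using Suc.prems by simp
      hence "real (i + m) \<le> real ((2::nat)^k)" by (simp only: of_nat_le_iff)
      thus ?thesis by simp
    qed
    have r01: "0 \<le> ?r" "?r \<le> 1" using c p by (auto simp: divide_le_eq)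
    have rs: "real i / 2^k \<le> ?r" "?r \<le> ?s" using p by (auto simp: divide_right_mono)
    have sp': "?s = (real (i + m) + 1) / 2^k" by simp
    have eq: "{?r .. ?s} = {?r} \<union> {?r <.. ?s}" using rs by auto
    have "measure \<nu> {?r .. ?s} = measure \<nu> {?r} + measure \<nu> {?r <.. ?s}" unfolding eq by (rule un) auto
    moreover have "measure \<nu> {?r .. ?s} \<ge> (1/2)^k"
      using dy[of "i + m" k] Suc.prems sp' by (simp add: add_divide_distrib add_ac)
    ultimately have a1: "measure \<nu> {?r <.. ?s} \<ge> (1/2)^k" using pt[OF r01] by simp
    have eq2: "{real i / 2^k .. ?s} = {real i / 2^k .. ?r} \<union> {?r <.. ?s}" using rs by auto
    have "measure \<nu> {real i / 2^k .. ?s} = measure \<nu> {real i / 2^k .. ?r} + measure \<nu> {?r <.. ?s}"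
      unfolding eq2 by (rule un) auto
    moreover have "real (Suc m) / 2^k = real m / 2^k + (1/2)^k" by (simp add: field_simps)
    ultimately show ?case using IH a1 by simp
  qed
  have tot: "measure \<nu> {0..1} = 1"
  proof -
    have "\<phi> -` {0..1} \<inter> {0..1} = space \<mu>" using theta_range sp by auto
    thus ?thesis using mn[of "{0..1}"] prob_space.prob_space[OF P] by simp
  qed
  have cdf_dy: "measure \<nu> {0 .. real m / 2^k} = real m / 2^k" if "m \<le> 2^k" for m k
  proof -
    define d where "d = real m / 2^k"
    have p: "(2::real)^k > 0" by simp
    have c: "real m \<le> 2^k"
    proof -
      have "real m \<le> real ((2::nat)^k)" using that by (simp only: of_nat_le_iff)
      thus ?thesis by simp
    qed
    have d01: "0 \<le> d" "d \<le> 1" unfolding d_def using c p by (auto simp: divide_le_eq)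
    have l1: "measure \<nu> {0 .. d} \<ge> d" using low[of 0 m k] that unfolding d_def by simp
    have "measure \<nu> {real m / 2^k .. (real m + real (2^k - m)) / 2^k} \<ge> real (2^k - m) / 2^k"
      using low[of m "2^k - m" k] that by simp
    moreover have "(real m + real (2^k - m)) / 2^k = 1" using that by (simp add: of_nat_diff)
    moreover have "real (2^k - m) / 2^k = 1 - d" unfolding d_def using that p by (simp add: of_nat_diff field_simps)
    ultimately have l2: "measure \<nu> {d .. 1} \<ge> 1 - d" unfolding d_def by simp
    have eq: "{d .. 1} = {d} \<union> {d <.. 1}" using d01 by auto
    have "measure \<nu> {d .. 1} = measure \<nu> {d} + measure \<nu> {d <.. 1}" unfolding eq by (rule un) auto
    hence e2: "measure \<nu> {d .. 1} = measure \<nu> {d <.. 1}" using pt[OF d01] by simp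
    have eq2: "{0..1} = {0 .. d} \<union> {d <.. 1}" using d01 by auto
    have "measure \<nu> {0..1} = measure \<nu> {0 .. d} + measure \<nu> {d <.. 1}" unfolding eq2 by (rule un) auto
    hence "measure \<nu> {0 .. d} = d" using tot e2 l1 l2 by simp
    thus ?thesis unfolding d_def .
  qed
  have cdf: "measure \<nu> {0 .. y} = y" if y: "0 \<le> y" "y \<le> 1" for y
  proof (cases "y = 1")
    case True thus ?thesis using tot by simp
  next
    case False
    hence y1: "y < 1" using y by simp
    have bd: "\<bar>measure \<nu> {0 .. y} - y\<bar> \<le> 1 * (1/2)^k" for k
    proof -
      have p: "(2::real)^k > 0" by simp
      define f where "f = floor (y * 2^k)"
      have f0: "0 \<le> f" unfolding f_def using y by simp
      define m where "m = nat f"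
      have rm: "real m = of_int f" unfolding m_def using f0 by simp
      have fl: "of_int f \<le> y * 2^k" "y * 2^k < of_int f + 1" unfolding f_def by linarith+
      have "y * 2^k < 1 * 2^k" using y1 p by (intro mult_strict_right_mono) auto
      hence "real m < 2^k" using fl rm by linarith
      hence "real m < real ((2::nat)^k)" by simp
      hence "m < 2^k" by (simp only: of_nat_less_iff)
      hence m1: "m + 1 \<le> 2^k" by simp
      have d1: "real m / 2^k \<le> y" using fl rm p by (simp add: divide_le_eq)
      have d2: "y \<le> real (m + 1) / 2^k" using fl rm p by (simp add: le_divide_eq)
      have "measure \<nu> {0 .. real m / 2^k} \<le> measure \<nu> {0..y}" using d1 by (intro mono) auto
      hence g1: "real m / 2^k \<le> measure \<nu> {0..y}" using cdf_dy[of m k] m1 by simp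
      have "measure \<nu> {0..y} \<le> measure \<nu> {0 .. real (m + 1) / 2^k}" using d2 by (intro mono) auto
      hence g2: "measure \<nu> {0..y} \<le> real (m + 1) / 2^k" using cdf_dy[of "m + 1" k] m1 by simp
      have "real (m + 1) / 2^k = real m / 2^k + (1/2)^k" by (simp add: field_simps)
      moreover have "y - real m / 2^k \<le> (1/2)^k"
      proof -
        have "y * 2^k - real m \<le> 1" using fl rm by simp
        hence "(y * 2^k - real m) / 2^k \<le> 1 / 2^k" using p by (intro divide_right_mono) auto
        thus ?thesis using p by (simp add: diff_divide_distrib power_one_over)
      qed
      ultimately show ?thesis using g1 g2 d1 d2 by (simp add: abs_le_iff)
    qed
    have "measure \<nu> {0 .. y} - y \<le> 0"
    proof (rule small_le[of _ 1])
      fix k show "measure \<nu> {0 .. y} - y \<le> 1 * (1/2)^k" using bd[of k] by (simp add: abs_le_iff)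
    qed
    moreover have "y - measure \<nu> {0 .. y} \<le> 0"
    proof (rule small_le[of _ 1])
      fix k show "y - measure \<nu> {0 .. y} \<le> 1 * (1/2)^k" using bd[of k] by (simp add: abs_le_iff)
    qed
    ultimately show ?thesis by simp
  qed
  have "\<phi> -` {0 .. \<phi> x} \<inter> {0..1} = {0..x}"
  proof (intro set_eqI iffI)
    fix y assume "y \<in> \<phi> -` {0 .. \<phi> x} \<inter> {0..1}"
    hence y: "0 \<le> y" "y \<le> 1" "\<phi> y \<le> \<phi> x" by auto
    have "y \<le> x" using theta_strict[of x y] x y by (cases "y \<le> x") auto
    thus "y \<in> {0..x}" using y by simp
  next
    fix y assume "y \<in> {0..x}"
    hence y: "0 \<le> y" "y \<le> x" by auto
    thus "y \<in> \<phi> -` {0 .. \<phi> x} \<inter> {0..1}" using theta_mono[of y x] theta_range[of y] x by auto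
  qed
  hence "measure \<mu> {0..x} = measure \<nu> {0 .. \<phi> x}" using mn[of "{0 .. \<phi> x}"] by simp
  also have "\<dots> = \<phi> x" using cdf theta_range[OF x] by simp
  finally show ?thesis .
qed

end

theorem lemma2p2:
  fixes a :: "nat \<Rightarrow> real"
  assumes "alpha_partition a"
  shows "(\<exists>g. homeomorphism {0..1} {0..1} (theta_alpha a) g)
    \<and> (\<forall>x\<in>{0..1}. theta_alpha a (F_alpha a x) = tent (theta_alpha a x))
    \<and> (\<exists>\<mu>. is_mu_alpha a \<mu>)
    \<and> (\<forall>\<mu>. is_mu_alpha a \<mu> \<longrightarrow> (\<forall>x\<in>{0..1}. measure \<mu> {0..x} = theta_alpha a x))"
proof -
  interpret AP a using assms by (rule AP.intro)
  show ?thesis using theta_homeo theta_conj mu_exists dist_fun by auto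
qed

end
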